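(* Let $G$ be a connected graph with girth at least $5$ and $G\neq C_6$, and let $\Delta$ be the maximum degree of $G$. Then $\chi_D(G)\le \Delta+1$.
   Context: A $k$-coloring of a graph $G$ is a map $\varphi:V(G)\to\{1,\dots,k\}$; it is proper if $\varphi(v)\ne\varphi(w)$ whenever $vw\in E(G)$. A coloring $\varphi$ is distinguishing if the only automorphism $f$ of $G$ with $\varphi(f(v))=\varphi(v)$ for all $v\in V(G)$ is the identity. The distinguishing chromatic number $\chi_D(G)$ is the smallest number of colors in a proper distinguishing coloring of $G$. The girth of a graph containing no cycle is taken to be infinite (so trees satisfy the girth hypothesis). $C_6$ is the cycle on $6$ vertices. *)

theory Defs
  imports Main
begin

definition simple_graph :: "'a set \<Rightarrow> ('a \<Rightarrow> 'a \<Rightarrow> bool) \<Rightarrow> bool" where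
  "simple_graph V E \<longleftrightarrow> finite V \<and>
     (\<forall>x y. E x y \<longrightarrow> x \<in> V \<and> y \<in> V \<and> x \<noteq> y \<and> E y x)"

definition connected_graph :: "'a set \<Rightarrow> ('a \<Rightarrow> 'a \<Rightarrow> bool) \<Rightarrow> bool" where
  "connected_graph V E \<longleftrightarrow> V \<noteq> {} \<and>
     (\<forall>x\<in>V. \<forall>y\<in>V. (x, y) \<in> {(u, v). E u v}\<^sup>*)"

definition has_cycle_of_length :: "'a set \<Rightarrow> ('a \<Rightarrow> 'a \<Rightarrow> bool) \<Rightarrow> nat \<Rightarrow> bool" where
  "has_cycle_of_length V E k \<longleftrightarrow> 3 \<le> k \<and>
     (\<exists>vs. length vs = k \<and> distinct vs \<and> set vs \<subseteq> V \<and>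
        (\<forall>i<k. E (vs ! i) (vs ! ((i + 1) mod k))))"

text \<open>Girth at least g (acyclic graphs have infinite girth, so they qualify).\<close>
definition girth_at_least :: "'a set \<Rightarrow> ('a \<Rightarrow> 'a \<Rightarrow> bool) \<Rightarrow> nat \<Rightarrow> bool" where
  "girth_at_least V E g \<longleftrightarrow> (\<forall>k<g. \<not> has_cycle_of_length V E k)"

definition iso_to_cycle :: "'a set \<Rightarrow> ('a \<Rightarrow> 'a \<Rightarrow> bool) \<Rightarrow> nat \<Rightarrow> bool" where
  "iso_to_cycle V E n \<longleftrightarrow>
     (\<exists>f. bij_betw f {0..<n} V \<and>
        (\<forall>i<n. \<forall>j<n. E (f i) (f j) \<longleftrightarrow> (j = (i + 1) mod n \<or> i = (j + 1) mod n)))"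

definition degree :: "'a set \<Rightarrow> ('a \<Rightarrow> 'a \<Rightarrow> bool) \<Rightarrow> 'a \<Rightarrow> nat" where
  "degree V E v = card {w\<in>V. E v w}"

definition max_degree :: "'a set \<Rightarrow> ('a \<Rightarrow> 'a \<Rightarrow> bool) \<Rightarrow> nat" where
  "max_degree V E = Max (degree V E ` V)"

definition automorphism :: "'a set \<Rightarrow> ('a \<Rightarrow> 'a \<Rightarrow> bool) \<Rightarrow> ('a \<Rightarrow> 'a) \<Rightarrow> bool" where
  "automorphism V E f \<longleftrightarrow> bij_betw f V V \<and> (\<forall>x\<in>V. \<forall>y\<in>V. E x y \<longleftrightarrow> E (f x) (f y))"

definition is_k_coloring :: "'a set \<Rightarrow> nat \<Rightarrow> ('a \<Rightarrow> nat) \<Rightarrow> bool" where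
  "is_k_coloring V k \<phi> \<longleftrightarrow> (\<forall>v\<in>V. \<phi> v \<in> {1..k})"

definition proper_coloring :: "'a set \<Rightarrow> ('a \<Rightarrow> 'a \<Rightarrow> bool) \<Rightarrow> ('a \<Rightarrow> nat) \<Rightarrow> bool" where
  "proper_coloring V E \<phi> \<longleftrightarrow> (\<forall>v\<in>V. \<forall>w\<in>V. E v w \<longrightarrow> \<phi> v \<noteq> \<phi> w)"

definition distinguishing_coloring :: "'a set \<Rightarrow> ('a \<Rightarrow> 'a \<Rightarrow> bool) \<Rightarrow> ('a \<Rightarrow> nat) \<Rightarrow> bool" where
  "distinguishing_coloring V E \<phi> \<longleftrightarrow>
     (\<forall>f. automorphism V E f \<and> (\<forall>v\<in>V. \<phi> (f v) = \<phi> v) \<longrightarrow> (\<forall>v\<in>V. f v = v))"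

definition distinguishing_chromatic_number :: "'a set \<Rightarrow> ('a \<Rightarrow> 'a \<Rightarrow> bool) \<Rightarrow> nat" where
  "distinguishing_chromatic_number V E =
     (LEAST k. \<exists>\<phi>. is_k_coloring V k \<phi> \<and> proper_coloring V E \<phi> \<and> distinguishing_coloring V E \<phi>)"

end

theory Submission
  imports Defs
begin


locale g5 =
  fixes V :: "'a set" and E :: "'a \<Rightarrow> 'a \<Rightarrow> bool"
  assumes sg: "simple_graph V E" and gi: "girth_at_least V E 5"
begin

lemma finV: "finite V" using sg by (simp add: simple_graph_def)
lemma Ein: "E x y \<Longrightarrow> x \<in> V \<and> y \<in> V" using sg by (simp add: simple_graph_def)
lemma Esym: "E x y \<Longrightarrow> E y x" using sg by (simp add: simple_graph_def)
lemma Eirr: "E x y \<Longrightarrow> x \<noteq> y" using sg by (simp add: simple_graph_def)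

lemma no_tri: "E a b \<Longrightarrow> E b c \<Longrightarrow> E a c \<Longrightarrow> False"
proof -
  assume ab: "E a b" and bc: "E b c" and ac: "E a c"
  have "has_cycle_of_length V E 3"
    unfolding has_cycle_of_length_def
  proof (intro conjI exI[of _ "[a,b,c]"])
    show "\<forall>i<3. E ([a,b,c] ! i) ([a,b,c] ! ((i + 1) mod 3))"
    proof (intro allI impI)
      fix i :: nat assume "i < 3"
      then have "i = 0 \<or> i = 1 \<or> i = 2" by auto
      then show "E ([a,b,c] ! i) ([a,b,c] ! ((i + 1) mod 3))"
        using ab bc ac Esym by auto
    qed
  qed (use ab bc ac Eirr Ein in auto)
  then show False using gi by (auto simp: girth_at_least_def)
qed

lemma common_nbr: "E x p \<Longrightarrow> E x q \<Longrightarrow> E y p \<Longrightarrow> E y q \<Longrightarrow> p \<noteq> q \<Longrightarrow> x = y"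
proof (rule ccontr)
  assume xp: "E x p" and xq: "E x q" and yp: "E y p" and yq: "E y q" and pq: "p \<noteq> q" and xy: "x \<noteq> y"
  have "has_cycle_of_length V E 4"
    unfolding has_cycle_of_length_def
  proof (intro conjI exI[of _ "[x,p,y,q]"])
    show "\<forall>i<4. E ([x,p,y,q] ! i) ([x,p,y,q] ! ((i + 1) mod 4))"
    proof (intro allI impI)
      fix i :: nat assume "i < 4"
      then have "i = 0 \<or> i = 1 \<or> i = 2 \<or> i = 3" by auto
      then show "E ([x,p,y,q] ! i) ([x,p,y,q] ! ((i + 1) mod 4))"
        using xp xq yp yq Esym by auto
    qed
    show "distinct [x,p,y,q]" using xp xq yp yq Eirr pq xy by auto
  qed (use xp yq Ein in auto)
  then show False using gi by (auto simp: girth_at_least_def)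
qed

end

inductive_set Fix :: "'a set \<Rightarrow> ('a \<Rightarrow> 'a \<Rightarrow> bool) \<Rightarrow> ('a \<Rightarrow> nat) \<Rightarrow> 'a set"
  for V E \<phi> where
  ty: "v \<in> V \<Longrightarrow> \<forall>w. w \<in> V \<and> w \<noteq> v \<and> \<phi> w = \<phi> v \<and> \<phi> ` {u. E w u} = \<phi> ` {u. E v u} \<longrightarrow> w \<in> Fix V E \<phi>
     \<Longrightarrow> v \<in> Fix V E \<phi>"
| two: "v \<in> V \<Longrightarrow> p \<in> Fix V E \<phi> \<Longrightarrow> q \<in> Fix V E \<phi> \<Longrightarrow> p \<noteq> q \<Longrightarrow> E v p \<Longrightarrow> E v q \<Longrightarrow> v \<in> Fix V E \<phi>"
| sib: "v \<in> V \<Longrightarrow> p \<in> Fix V E \<phi> \<Longrightarrow> E p v \<Longrightarrow> \<forall>x. E p x \<and> x \<noteq> v \<and> \<phi> x = \<phi> v \<longrightarrow> x \<in> Fix V E \<phi>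
     \<Longrightarrow> v \<in> Fix V E \<phi>"

context g5 begin

lemma Fix_sound:
  assumes f: "automorphism V E f" and pr: "\<forall>v\<in>V. \<phi> (f v) = \<phi> v"
    and v: "v \<in> Fix V E \<phi>"
  shows "f v = v"
proof -
  have bij: "bij_betw f V V" and adj: "\<And>x y. x\<in>V \<Longrightarrow> y\<in>V \<Longrightarrow> E x y \<longleftrightarrow> E (f x) (f y)"
    using f by (auto simp: automorphism_def)
  have fV: "x \<in> V \<Longrightarrow> f x \<in> V" for x using bij bij_betwE by blast
  have inj: "x \<in> V \<Longrightarrow> y \<in> V \<Longrightarrow> f x = f y \<Longrightarrow> x = y" for x y
    using bij by (auto simp: bij_betw_def inj_on_def)
  have surj: "y \<in> V \<Longrightarrow> \<exists>u\<in>V. y = f u" for y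
    using bij by (metis bij_betw_imp_surj_on imageE)
  have Ef: "E x y \<Longrightarrow> E (f x) (f y)" for x y using adj Ein by blast
  show ?thesis using v
  proof (induction rule: Fix.induct)
    case (ty v)
    have N: "{u. E (f v) u} = f ` {u. E v u}"
    proof
      show "f ` {u. E v u} \<subseteq> {u. E (f v) u}" using Ef by blast
      show "{u. E (f v) u} \<subseteq> f ` {u. E v u}"
      proof
        fix y assume "y \<in> {u. E (f v) u}"
        then have y: "E (f v) y" by simp
        then have "y \<in> V" using Ein by blast
        then obtain u where u: "u \<in> V" "y = f u" using surj by blast
        then have "E v u" using adj[OF ty.hyps(1) u(1)] y by simp
        then show "y \<in> f ` {u. E v u}" using u by blast
      qed
    qed
    have "\<phi> ` {u. E (f v) u} = (\<phi> \<circ> f) ` {u. E v u}" using N by (simp add: image_comp)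
    also have "\<dots> = \<phi> ` {u. E v u}"
    proof (rule image_cong[OF refl])
      fix x assume "x \<in> {u. E v u}"
      then have "x \<in> V" using Ein by blast
      then show "(\<phi> \<circ> f) x = \<phi> x" using pr by simp
    qed
    finally have eq: "\<phi> ` {u. E (f v) u} = \<phi> ` {u. E v u}" .
    show ?case
    proof (rule ccontr)
      assume ne: "f v \<noteq> v"
      have fvV: "f v \<in> V" using fV ty.hyps(1) .
      have "\<phi> (f v) = \<phi> v" using pr ty.hyps(1) by blast
      then have "f v \<in> Fix V E \<phi> \<inter> {x. f x = x}"
        using ty.IH ne fvV eq by blast
      then have "f (f v) = f v" by simp
      then show False using inj[of "f v" v] fvV ty.hyps(1) ne by blast
    qed
  next
    case (two v p q)
    have "E (f v) (f p)" "E (f v) (f q)" using Ef two.hyps by blast+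
    then have "E (f v) p" "E (f v) q" using two.IH by simp_all
    then show ?case using common_nbr[of v p q "f v"] two.hyps by metis
  next
    case (sib v p)
    have "E (f p) (f v)" using Ef sib.hyps(3) by blast
    then have pfv: "E p (f v)" using sib.IH(1) by simp
    show ?case
    proof (rule ccontr)
      assume ne: "f v \<noteq> v"
      have fvV: "f v \<in> V" using fV sib.hyps(1) .
      have "\<phi> (f v) = \<phi> v" using pr sib.hyps(1) by blast
      then have "f v \<in> Fix V E \<phi> \<inter> {x. f x = x}"
        using sib.IH(2) ne pfv by blast
      then have "f (f v) = f v" by simp
      then show False using inj[of "f v" v] fvV sib.hyps(1) ne by blast
    qed
  qed
qed


lemma finN: "finite {u. E v u}"
  by (rule finite_subset[OF _ finV]) (use Ein in blast)

lemma NsubV: "{u. E v u} \<subseteq> V" using Ein by blast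

definition Gc :: "nat \<Rightarrow> 'a set \<Rightarrow> 'a set \<Rightarrow> ('a \<Rightarrow> nat) \<Rightarrow> bool" where
  "Gc D R I0 \<psi> \<longleftrightarrow> (\<forall>v\<in>V-R. \<psi> v = 0 \<longrightarrow> {1..D} \<subseteq> \<psi> ` {u. E v u}) \<and>
      (\<forall>v\<in>V-I0. \<psi> v \<noteq> 0 \<longrightarrow> (\<exists>u. E v u \<and> \<psi> u \<noteq> 0))"

definition inv :: "nat \<Rightarrow> 'a set \<Rightarrow> 'a set \<Rightarrow> 'a set \<Rightarrow> ('a \<Rightarrow> nat) \<Rightarrow> bool" where
  "inv D R I0 C \<phi> \<longleftrightarrow> C \<subseteq> V \<and> C \<noteq> {} \<and>
    (\<forall>v\<in>C. \<phi> v \<le> D) \<and>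
    (\<forall>v\<in>C. \<forall>w\<in>C. E v w \<longrightarrow> \<phi> v \<noteq> \<phi> w) \<and>
    (\<forall>v\<in>C. \<phi> v = 0 \<longrightarrow> (\<forall>u. E v u \<longrightarrow> u \<in> C)) \<and>
    (\<forall>v\<in>C-R. \<phi> v = 0 \<longrightarrow> {1..D} \<subseteq> \<phi> ` {u. E v u}) \<and>
    (\<forall>v\<in>C. \<phi> v \<noteq> 0 \<longrightarrow> (\<exists>u\<in>C. E v u)) \<and>
    (\<forall>v\<in>C-I0. \<phi> v \<noteq> 0 \<longrightarrow> (\<exists>u\<in>C. E v u \<and> \<phi> u \<noteq> 0)) \<and>
    (\<forall>\<psi>. (\<forall>v\<in>C. \<psi> v = \<phi> v) \<and> Gc D R I0 \<psi> \<longrightarrow> C \<subseteq> Fix V E \<psi>)"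

lemma edge_out:
  assumes conn: "\<forall>x\<in>V. \<forall>y\<in>V. (x, y) \<in> {(u, v). E u v}\<^sup>*"
    and C: "C \<subseteq> V" "C \<noteq> {}" "C \<noteq> V"
  shows "\<exists>p\<in>C. \<exists>u. u \<in> V \<and> u \<notin> C \<and> E p u"
proof -
  obtain c where c: "c \<in> C" using C by blast
  obtain y where y: "y \<in> V" "y \<notin> C" using C by blast
  have "(c, y) \<in> {(u, v). E u v}\<^sup>*" using conn c y C by blast
  then have "y \<notin> C \<longrightarrow> (\<exists>p\<in>C. \<exists>u. u \<in> V \<and> u \<notin> C \<and> E p u)"
  proof (induction rule: rtrancl_induct)
    case base then show ?case using c by blast
  next
    case (step y z)
    then show ?case using Ein by blast
  qed
  then show ?thesis using y by blast
qed

lemma invD: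
  assumes "inv D R I0 C \<phi>"
  shows "C \<subseteq> V" "C \<noteq> {}" "\<And>v. v\<in>C \<Longrightarrow> \<phi> v \<le> D"
    "\<And>v w. v\<in>C \<Longrightarrow> w\<in>C \<Longrightarrow> E v w \<Longrightarrow> \<phi> v \<noteq> \<phi> w"
    "\<And>v u. v\<in>C \<Longrightarrow> \<phi> v = 0 \<Longrightarrow> E v u \<Longrightarrow> u \<in> C"
    "\<And>v. v\<in>C \<Longrightarrow> v \<notin> R \<Longrightarrow> \<phi> v = 0 \<Longrightarrow> {1..D} \<subseteq> \<phi> ` {u. E v u}"
    "\<And>v. v\<in>C \<Longrightarrow> \<phi> v \<noteq> 0 \<Longrightarrow> (\<exists>u\<in>C. E v u)"
    "\<And>v. v\<in>C \<Longrightarrow> v \<notin> I0 \<Longrightarrow> \<phi> v \<noteq> 0 \<Longrightarrow> (\<exists>u\<in>C. E v u \<and> \<phi> u \<noteq> 0)"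
    "\<And>\<psi>. (\<forall>v\<in>C. \<psi> v = \<phi> v) \<Longrightarrow> Gc D R I0 \<psi> \<Longrightarrow> C \<subseteq> Fix V E \<psi>"
  using assms unfolding inv_def by blast+

lemma inv_final:
  assumes "inv D R I0 V \<phi>"
  shows "(\<forall>v\<in>V. \<phi> v \<le> D) \<and> (\<forall>v\<in>V. \<forall>w\<in>V. E v w \<longrightarrow> \<phi> v \<noteq> \<phi> w) \<and> V \<subseteq> Fix V E \<phi>"
proof -
  note h = invD[OF assms]
  have "Gc D R I0 \<phi>" unfolding Gc_def using h(6) h(8) by blast
  then show ?thesis using h(3) h(4) h(9)[of \<phi>] by blast
qed


lemma invI:
  assumes "C \<subseteq> V" "C \<noteq> {}" "\<And>v. v\<in>C \<Longrightarrow> \<phi> v \<le> D"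
    "\<And>v w. v\<in>C \<Longrightarrow> w\<in>C \<Longrightarrow> E v w \<Longrightarrow> \<phi> v \<noteq> \<phi> w"
    "\<And>v u. v\<in>C \<Longrightarrow> \<phi> v = 0 \<Longrightarrow> E v u \<Longrightarrow> u \<in> C"
    "\<And>v. v\<in>C \<Longrightarrow> v \<notin> R \<Longrightarrow> \<phi> v = 0 \<Longrightarrow> {1..D} \<subseteq> \<phi> ` {u. E v u}"
    "\<And>v. v\<in>C \<Longrightarrow> \<phi> v \<noteq> 0 \<Longrightarrow> (\<exists>u\<in>C. E v u)"
    "\<And>v. v\<in>C \<Longrightarrow> v \<notin> I0 \<Longrightarrow> \<phi> v \<noteq> 0 \<Longrightarrow> (\<exists>u\<in>C. E v u \<and> \<phi> u \<noteq> 0)"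
    "\<And>\<psi>. (\<forall>v\<in>C. \<psi> v = \<phi> v) \<Longrightarrow> Gc D R I0 \<psi> \<Longrightarrow> C \<subseteq> Fix V E \<psi>"
  shows "inv D R I0 C \<phi>"
  unfolding inv_def using assms by blast

lemma stepA:
  assumes I: "inv D R I0 C \<phi>" and deg: "\<forall>v\<in>V. card {u. E v u} \<le> D"
    and u: "u \<in> V" "u \<notin> C" and pq: "p \<in> C" "q \<in> C" "p \<noteq> q" "E u p" "E u q"
  shows "\<exists>c. inv D R I0 (insert u C) (\<phi>(u := c))"
proof -
  note h = invD[OF I]
  define CN where "CN = {x\<in>C. E u x}"
  define c where "c = (if \<exists>c\<in>{1..D}. c \<notin> \<phi> ` CN then (SOME c. c\<in>{1..D} \<and> c \<notin> \<phi> ` CN) else 0)"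
  define \<phi>' where "\<phi>' = \<phi>(u := c)"
  have uN: "u \<notin> {x. E u x}" using Eirr by blast
  have c1: "c \<noteq> 0 \<Longrightarrow> c \<in> {1..D} \<and> c \<notin> \<phi> ` CN"
  proof -
    assume "c \<noteq> 0"
    then have ex: "\<exists>c\<in>{1..D}. c \<notin> \<phi> ` CN" unfolding c_def by (auto split: if_splits)
    then have ceq: "c = (SOME c. c\<in>{1..D} \<and> c \<notin> \<phi> ` CN)" unfolding c_def by simp
    have ex': "\<exists>c. c\<in>{1..D} \<and> c \<notin> \<phi> ` CN" using ex by blast
    show ?thesis unfolding ceq by (rule someI_ex[OF ex'])
  qed
  have c0: "c = 0 \<Longrightarrow> {1..D} \<subseteq> \<phi> ` CN"
  proof -
    assume c00: "c = 0"
    show ?thesis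
    proof (rule ccontr)
      assume "\<not> {1..D} \<subseteq> \<phi> ` CN"
      then have ex: "\<exists>c\<in>{1..D}. c \<notin> \<phi> ` CN" by blast
      then have ceq: "c = (SOME c. c\<in>{1..D} \<and> c \<notin> \<phi> ` CN)" unfolding c_def by simp
      have ex': "\<exists>c. c\<in>{1..D} \<and> c \<notin> \<phi> ` CN" using ex by blast
      have "c \<in> {1..D} \<and> c \<notin> \<phi> ` CN" unfolding ceq by (rule someI_ex[OF ex'])
      then show False using c00 by simp
    qed
  qed
  have CNsub: "CN \<subseteq> {x. E u x}" unfolding CN_def by blast
  have c0all: "c = 0 \<Longrightarrow> CN = {x. E u x}"
  proof -
    assume "c = 0"
    then have sub: "{1..D} \<subseteq> \<phi> ` CN" by (rule c0)
    have fCN: "finite CN" using finite_subset[OF CNsub finN] .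
    have "D \<le> card (\<phi> ` CN)" using card_mono[OF finite_imageI[OF fCN] sub] by simp
    also have "\<dots> \<le> card CN" using card_image_le[OF fCN] .
    finally have "D \<le> card CN" .
    moreover have "card {x. E u x} \<le> D" using deg u by blast
    ultimately have "card CN = card {x. E u x}" using card_mono[OF finN CNsub] by linarith
    then show ?thesis using card_subset_eq[OF finN CNsub] by blast
  qed
  have nz_nbr: "\<And>x. x \<in> C \<Longrightarrow> E u x \<Longrightarrow> \<phi> x \<noteq> 0"
  proof
    fix x assume "x \<in> C" "E u x" "\<phi> x = 0"
    then have "u \<in> C" using h(5) Esym by blast
    then show False using u by blast
  qed
  have "inv D R I0 (insert u C) \<phi>'"
  proof (rule invI)
    show "insert u C \<subseteq> V" using h(1) u by blast
    show "insert u C \<noteq> {}" by blast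
    show "\<phi>' v \<le> D" if "v \<in> insert u C" for v
      using that h(3) c1 unfolding \<phi>'_def by (cases "v = u") auto
    show "\<phi>' v \<noteq> \<phi>' w" if "v \<in> insert u C" "w \<in> insert u C" "E v w" for v w
    proof -
      have vw: "v \<noteq> w" using Eirr that(3) by blast
      have key: "\<phi>' u \<noteq> \<phi>' x" if "x \<in> C" "E u x" for x
      proof -
        have xu: "x \<noteq> u" using that u by blast
        have "x \<in> CN" unfolding CN_def using that by blast
        then have "c \<noteq> \<phi> x" using c1 nz_nbr[OF that] by fastforce
        then show ?thesis unfolding \<phi>'_def using xu by simp
      qed
      show ?thesis
      proof (cases "v = u")
        case True
        then have "w \<in> C" using that vw by blast
        then show ?thesis using key True that(3) by blast
      next
        case False
        note vC = this
        show ?thesis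
        proof (cases "w = u")
          case True
          then have "v \<in> C" using that vC by blast
          then show ?thesis using key[of v] True that(3) Esym by metis
        next
          case False
          then show ?thesis using vC that h(4) unfolding \<phi>'_def by auto
        qed
      qed
    qed
    show "x \<in> insert u C" if "v \<in> insert u C" "\<phi>' v = 0" "E v x" for v x
    proof (cases "v = u")
      case True
      then have "c = 0" using that unfolding \<phi>'_def by simp
      then have "CN = {x. E u x}" by (rule c0all)
      then show ?thesis using True that(3) unfolding CN_def by blast
    next
      case False
      then show ?thesis using that h(5) unfolding \<phi>'_def by auto
    qed
    show "{1..D} \<subseteq> \<phi>' ` {x. E v x}" if "v \<in> insert u C" "v \<notin> R" "\<phi>' v = 0" for v
    proof (cases "v = u")
      case True
      then have "c = 0" using that unfolding \<phi>'_def by simp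
      then have sub: "{1..D} \<subseteq> \<phi> ` CN" and eq: "CN = {x. E u x}" using c0 c0all by auto
      have "\<phi>' ` {x. E u x} = \<phi> ` {x. E u x}" unfolding \<phi>'_def using uN by (intro image_cong) auto
      then show ?thesis using sub eq True by simp
    next
      case False
      then have vC: "v \<in> C" "\<phi> v = 0" using that unfolding \<phi>'_def by auto
      have "u \<notin> {x. E v x}" using h(5)[OF vC] u by blast
      then have "\<phi>' ` {x. E v x} = \<phi> ` {x. E v x}" unfolding \<phi>'_def by (intro image_cong) auto
      then show ?thesis using h(6)[OF vC(1) that(2) vC(2)] by simp
    qed
    show "\<exists>x\<in>insert u C. E v x" if "v \<in> insert u C" "\<phi>' v \<noteq> 0" for v
    proof (cases "v = u")
      case True then show ?thesis using pq by blast
    next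
      case False then show ?thesis using that h(7) unfolding \<phi>'_def by auto
    qed
    show "\<exists>x\<in>insert u C. E v x \<and> \<phi>' x \<noteq> 0" if "v \<in> insert u C" "v \<notin> I0" "\<phi>' v \<noteq> 0" for v
    proof (cases "v = u")
      case True
      have "\<phi>' p \<noteq> 0" using nz_nbr[OF pq(1) pq(4)] pq(1) u unfolding \<phi>'_def by auto
      then show ?thesis using pq True by blast
    next
      case False
      then have vC: "v \<in> C" "\<phi> v \<noteq> 0" using that unfolding \<phi>'_def by auto
      have vI: "v \<notin> I0" using that by blast
      obtain x where "x \<in> C" "E v x" "\<phi> x \<noteq> 0" using h(8)[OF vC(1) vI vC(2)] by blast
      moreover have "x \<noteq> u" using \<open>x \<in> C\<close> u by blast
      ultimately show ?thesis unfolding \<phi>'_def by auto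
    qed
    show "insert u C \<subseteq> Fix V E \<psi>" if "\<forall>v\<in>insert u C. \<psi> v = \<phi>' v" "Gc D R I0 \<psi>" for \<psi>
    proof -
      have "\<forall>v\<in>C. \<psi> v = \<phi> v" using that(1) u unfolding \<phi>'_def by auto
      then have CF: "C \<subseteq> Fix V E \<psi>" using h(9) that(2) by blast
      have "u \<in> Fix V E \<psi>"
        by (rule Fix.two[of u V p E \<psi> q]) (use u pq CF in auto)
      then show ?thesis using CF by blast
    qed
  qed
  then show ?thesis unfolding \<phi>'_def by blast
qed


lemma stepB:
  assumes I: "inv D R I0 C \<phi>" and deg: "\<forall>v\<in>V. card {u. E v u} \<le> D"
    and cB: "\<And>a b c. a \<in> V \<Longrightarrow> a \<notin> C \<Longrightarrow> b \<in> C \<Longrightarrow> c \<in> C \<Longrightarrow> E a b \<Longrightarrow> E a c \<Longrightarrow> b = c"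
    and p: "p \<in> C" and u0: "u0 \<notin> C" "E p u0"
  shows "\<exists>\<phi>'. inv D R I0 (C \<union> {x. E p x \<and> x \<notin> C}) \<phi>'"
proof -
  note h = invD[OF I]
  define P where "P = {x. E p x \<and> x \<notin> C}"
  have pV: "p \<in> V" using p h(1) by blast
  have PV: "P \<subseteq> V" unfolding P_def using Ein by blast
  have p0: "\<phi> p \<noteq> 0" using h(5)[OF p] u0 by blast
  obtain q where q: "q \<in> C" "E p q" using h(7)[OF p p0] by blast
  have PN: "P \<subseteq> {x. E p x} - {q}" unfolding P_def using q by blast
  have fD: "finite ({x. E p x} - {q})" using finN[of p] by simp
  have fP: "finite P" using finite_subset[OF PN fD] .
  have "card P \<le> card ({x. E p x} - {q})" using card_mono[OF fD PN] .
  also have "\<dots> = card {x. E p x} - 1" using q(2) finN[of p] by (simp add: card_Diff_singleton)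
  also have "\<dots> \<le> D - 1" using deg pV diff_le_mono by blast
  finally have cP: "card P \<le> D - 1" .
  define K where "K = {1..D} - {\<phi> p}"
  have "\<phi> p \<in> {1..D}" using h(3)[OF p] p0 by simp
  then have cK: "card K = D - 1" unfolding K_def by (simp add: card_Diff_singleton)
  have fK: "finite K" unfolding K_def by simp
  obtain g where g: "g ` P \<subseteq> K" "inj_on g P" using card_le_inj[OF fP fK] cP cK by auto
  define \<phi>' where "\<phi>' = (\<lambda>x. if x \<in> P then g x else \<phi> x)"
  have \<phi>'C: "x \<in> C \<Longrightarrow> \<phi>' x = \<phi> x" for x unfolding \<phi>'_def P_def by auto
  have \<phi>'P: "x \<in> P \<Longrightarrow> \<phi>' x = g x" for x unfolding \<phi>'_def by auto
  have gK: "x \<in> P \<Longrightarrow> g x \<in> {1..D} \<and> g x \<noteq> \<phi> p" for x using g(1) unfolding K_def by blast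
  have PnC: "x \<in> P \<Longrightarrow> x \<notin> C" for x unfolding P_def by blast
  have Pp: "x \<in> P \<Longrightarrow> E p x" for x unfolding P_def by blast
  have onlyp: "x \<in> P \<Longrightarrow> y \<in> C \<Longrightarrow> E x y \<Longrightarrow> y = p" for x y
  proof -
    assume a: "x \<in> P" "y \<in> C" "E x y"
    show "y = p" using cB[of x y p] PV a PnC[OF a(1)] Pp[OF a(1)] Esym p by blast
  qed
  have "inv D R I0 (C \<union> P) \<phi>'"
  proof (rule invI)
    show "C \<union> P \<subseteq> V" using h(1) PV by blast
    show "C \<union> P \<noteq> {}" using p by blast
    show "\<phi>' v \<le> D" if "v \<in> C \<union> P" for v
    proof (cases "v \<in> P")
      case True then show ?thesis using gK[OF True] \<phi>'P[OF True] by simp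
    next
      case False then have "v \<in> C" using that by blast
      then show ?thesis using h(3) \<phi>'C by simp
    qed
    show "\<phi>' v \<noteq> \<phi>' w" if "v \<in> C \<union> P" "w \<in> C \<union> P" "E v w" for v w
    proof -
      have key: "\<phi>' x \<noteq> \<phi>' y" if "x \<in> P" "y \<in> C" "E x y" for x y
      proof -
        have "y = p" using onlyp that by blast
        then show ?thesis using gK[OF that(1)] \<phi>'P[OF that(1)] \<phi>'C[OF that(2)] by simp
      qed
      show ?thesis
      proof (cases "v \<in> P")
        case vP: True
        show ?thesis
        proof (cases "w \<in> P")
          case True
          then show ?thesis using no_tri[of p v w] Pp[OF vP] Pp[OF True] that(3) by blast
        next
          case False
          then show ?thesis using key vP that by blast
        qed
      next
        case vnP: False
        show ?thesis
        proof (cases "w \<in> P")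
          case True
          then have "v \<in> C" using vnP that by blast
          then show ?thesis using key[of w v] True that(3) Esym by metis
        next
          case False
          then have "v \<in> C" "w \<in> C" using vnP that by blast+
          then show ?thesis using h(4)[of v w] that(3) \<phi>'C[of v] \<phi>'C[of w] by simp
        qed
      qed
    qed
    show "x \<in> C \<union> P" if "v \<in> C \<union> P" "\<phi>' v = 0" "E v x" for v x
    proof (cases "v \<in> P")
      case True then show ?thesis using that gK \<phi>'P by fastforce
    next
      case False
      then have "v \<in> C" using that by blast
      then have "\<phi> v = 0" using that(2) \<phi>'C by simp
      then show ?thesis using h(5)[OF \<open>v \<in> C\<close> _ that(3)] by blast
    qed
    show "{1..D} \<subseteq> \<phi>' ` {x. E v x}" if "v \<in> C \<union> P" "v \<notin> R" "\<phi>' v = 0" for v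
    proof (cases "v \<in> P")
      case True then show ?thesis using that gK \<phi>'P by fastforce
    next
      case False
      then have vC: "v \<in> C" "\<phi> v = 0" using that \<phi>'C by auto
      have "\<phi>' ` {x. E v x} = \<phi> ` {x. E v x}" using h(5)[OF vC] \<phi>'C by (intro image_cong) auto
      then show ?thesis using h(6)[OF vC(1) that(2) vC(2)] by simp
    qed
    show "\<exists>x\<in>C \<union> P. E v x" if "v \<in> C \<union> P" "\<phi>' v \<noteq> 0" for v
    proof (cases "v \<in> P")
      case True then show ?thesis using p Pp Esym by blast
    next
      case False
      then have "v \<in> C" "\<phi> v \<noteq> 0" using that \<phi>'C by auto
      then show ?thesis using h(7) by blast
    qed
    show "\<exists>x\<in>C \<union> P. E v x \<and> \<phi>' x \<noteq> 0" if "v \<in> C \<union> P" "v \<notin> I0" "\<phi>' v \<noteq> 0" for v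
    proof (cases "v \<in> P")
      case True
      have "E v p" using Pp[OF True] Esym by blast
      moreover have "\<phi>' p \<noteq> 0" using p0 \<phi>'C[OF p] by simp
      ultimately show ?thesis using p by blast
    next
      case False
      then have vC: "v \<in> C" "\<phi> v \<noteq> 0" using that \<phi>'C by auto
      have vI: "v \<notin> I0" using that by blast
      obtain x where "x \<in> C" "E v x" "\<phi> x \<noteq> 0" using h(8)[OF vC(1) vI vC(2)] by blast
      then show ?thesis using \<phi>'C[of x] by auto
    qed
    show "C \<union> P \<subseteq> Fix V E \<psi>" if psi: "\<forall>v\<in>C \<union> P. \<psi> v = \<phi>' v" "Gc D R I0 \<psi>" for \<psi>
    proof -
      have "\<forall>v\<in>C. \<psi> v = \<phi> v" using that(1) \<phi>'C by auto
      then have CF: "C \<subseteq> Fix V E \<psi>" using h(9) that(2) by blast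
      have "v \<in> Fix V E \<psi>" if vP: "v \<in> P" for v
      proof (rule Fix.sib[of v V p])
        show "v \<in> V" using vP PV by blast
        show "p \<in> Fix V E \<psi>" using CF p by blast
        show "E p v" using Pp vP .
        show "\<forall>x. E p x \<and> x \<noteq> v \<and> \<psi> x = \<psi> v \<longrightarrow> x \<in> Fix V E \<psi>"
        proof (intro allI impI)
          fix x assume x: "E p x \<and> x \<noteq> v \<and> \<psi> x = \<psi> v"
          show "x \<in> Fix V E \<psi>"
          proof (cases "x \<in> C")
            case True then show ?thesis using CF by blast
          next
            case False
            then have xP: "x \<in> P" unfolding P_def using x by blast
            have "\<psi> x = g x" "\<psi> v = g v" using psi(1) xP vP \<phi>'P by auto
            then have "g x = g v" using x by simp
            then have "x = v" using g(2) xP vP by (meson inj_onD)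
            then show ?thesis using x by blast
          qed
        qed
      qed
      then show ?thesis using CF by blast
    qed
  qed
  then show ?thesis unfolding P_def by blast
qed


lemma process:
  assumes conn: "\<forall>x\<in>V. \<forall>y\<in>V. (x, y) \<in> {(u, v). E u v}\<^sup>*"
    and deg: "\<forall>v\<in>V. card {u. E v u} \<le> D"
  shows "inv D R I0 C \<phi> \<Longrightarrow> \<exists>\<phi>'. (\<forall>v\<in>V. \<phi>' v \<le> D) \<and> (\<forall>v\<in>V. \<forall>w\<in>V. E v w \<longrightarrow> \<phi>' v \<noteq> \<phi>' w) \<and> V \<subseteq> Fix V E \<phi>'"
proof (induction "card (V - C)" arbitrary: C \<phi> rule: less_induct)
  case less
  note h = invD[OF less.prems]
  show ?case
  proof (cases "C = V")
    case True
    then show ?thesis using inv_final less.prems by blast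
  next
    case False
    obtain p u0 where pu: "p \<in> C" "u0 \<in> V" "u0 \<notin> C" "E p u0"
      using edge_out[OF conn h(1) h(2) False] by blast
    show ?thesis
    proof (cases "\<exists>u p q. u\<in>V \<and> u\<notin>C \<and> p\<in>C \<and> q\<in>C \<and> p\<noteq>q \<and> E u p \<and> E u q")
      case True
      then obtain u p q where upq: "u\<in>V" "u\<notin>C" "p\<in>C" "q\<in>C" "p\<noteq>q" "E u p" "E u q" by blast
      obtain c where I': "inv D R I0 (insert u C) (\<phi>(u := c))"
        using stepA[OF less.prems deg upq] by blast
      have "card (V - insert u C) < card (V - C)"
        using upq(1,2) finV by (metis Diff_insert card_Diff1_less finite_Diff DiffI)
      then show ?thesis using less.hyps I' by blast
    next
      case False
      have cB: "b = c" if "a \<in> V" "a \<notin> C" "b \<in> C" "c \<in> C" "E a b" "E a c" for a b c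
        using False that by blast
      have "\<exists>\<phi>'. inv D R I0 (C \<union> {x. E p x \<and> x \<notin> C}) \<phi>'"
      proof (rule stepB[OF less.prems deg _ pu(1) pu(3) pu(4)])
        fix a b c assume "a \<in> V" "a \<notin> C" "b \<in> C" "c \<in> C" "E a b" "E a c"
        then show "b = c" by (rule cB)
      qed
      then obtain \<phi>' where I': "inv D R I0 (C \<union> {x. E p x \<and> x \<notin> C}) \<phi>'" by blast
      have sub: "V - (C \<union> {x. E p x \<and> x \<notin> C}) \<subseteq> V - C - {u0}" using pu by blast
      have "card (V - (C \<union> {x. E p x \<and> x \<notin> C})) \<le> card (V - C - {u0})"
        using card_mono[OF _ sub] finV by blast
      also have "\<dots> < card (V - C)" using pu finV by (metis card_Diff1_less finite_Diff DiffI)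
      finally show ?thesis using less.hyps I' by blast
    qed
  qed
qed


lemma final:
  assumes "\<forall>v\<in>V. \<phi> v \<le> D" "\<forall>v\<in>V. \<forall>w\<in>V. E v w \<longrightarrow> \<phi> v \<noteq> \<phi> w" "V \<subseteq> Fix V E \<phi>"
  shows "distinguishing_chromatic_number V E \<le> D + 1"
proof -
  define \<phi>' where "\<phi>' = (\<lambda>v. \<phi> v + 1)"
  have "is_k_coloring V (D+1) \<phi>'" using assms(1) unfolding is_k_coloring_def \<phi>'_def by auto
  moreover have "proper_coloring V E \<phi>'" using assms(2) unfolding proper_coloring_def \<phi>'_def by auto
  moreover have "distinguishing_coloring V E \<phi>'"
    unfolding distinguishing_coloring_def
  proof (intro allI impI ballI)
    fix f v assume a: "automorphism V E f \<and> (\<forall>v\<in>V. \<phi>' (f v) = \<phi>' v)" and v: "v \<in> V"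
    have "\<forall>v\<in>V. \<phi> (f v) = \<phi> v" using a unfolding \<phi>'_def by auto
    then show "f v = v" using Fix_sound[of f \<phi> v] a v assms(3) by blast
  qed
  ultimately show ?thesis unfolding distinguishing_chromatic_number_def by (intro Least_le) blast
qed

lemma init1:
  assumes r: "r \<in> V" and degr: "card {u. E r u} \<le> D"
    and alt: "card {u. E r u} < D \<or> V \<subseteq> insert r {u. E r u}"
  shows "\<exists>\<phi>. inv D {r} (insert r {u. E r u}) (insert r {u. E r u}) \<phi>"
proof -
  define N where "N = {u. E r u}"
  define C where "C = insert r N"
  have fN: "finite N" unfolding N_def by (rule finN)
  have "card N \<le> card {1..D}" using degr unfolding N_def by simp
  then obtain g where g: "g ` N \<subseteq> {1..D}" "inj_on g N" using card_le_inj[OF fN] by blast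
  define \<phi> where "\<phi> = (\<lambda>x. if x = r then 0 else g x)"
  have rN: "r \<notin> N" unfolding N_def using Eirr by blast
  have \<phi>N: "x \<in> N \<Longrightarrow> \<phi> x = g x \<and> g x \<in> {1..D}" for x unfolding \<phi>_def using rN g(1) by auto
  have \<phi>r: "\<phi> r = 0" unfolding \<phi>_def by simp
  have CV: "C \<subseteq> V" unfolding C_def N_def using r Ein by blast
  have "inv D {r} C C \<phi>"
  proof (rule invI)
    show "C \<subseteq> V" by (rule CV)
    show "C \<noteq> {}" unfolding C_def by blast
    show "\<phi> v \<le> D" if "v \<in> C" for v using that \<phi>N \<phi>r unfolding C_def by auto
    show "\<phi> v \<noteq> \<phi> w" if "v \<in> C" "w \<in> C" "E v w" for v w
    proof -
      have "\<not> (v \<in> N \<and> w \<in> N)" using that(3) no_tri[of r v w] unfolding N_def by blast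
      moreover have "v \<noteq> w" using Eirr that(3) by blast
      ultimately show ?thesis using that \<phi>N \<phi>r unfolding C_def by fastforce
    qed
    show "u \<in> C" if "v \<in> C" "\<phi> v = 0" "E v u" for v u
    proof -
      have "v = r" using that \<phi>N unfolding C_def by fastforce
      then show ?thesis using that unfolding C_def N_def by blast
    qed
    show "{1..D} \<subseteq> \<phi> ` {u. E v u}" if "v \<in> C" "v \<notin> {r}" "\<phi> v = 0" for v
      using that \<phi>N unfolding C_def by fastforce
    show "\<exists>u\<in>C. E v u" if "v \<in> C" "\<phi> v \<noteq> 0" for v
    proof -
      have "v \<in> N" using that \<phi>r unfolding C_def by blast
      then show ?thesis unfolding C_def N_def using Esym by blast
    qed
    show "\<exists>u\<in>C. E v u \<and> \<phi> u \<noteq> 0" if "v \<in> C" "v \<notin> C" "\<phi> v \<noteq> 0" for v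
      using that by blast
    show "C \<subseteq> Fix V E \<psi>" if psi: "\<forall>v\<in>C. \<psi> v = \<phi> v" "Gc D {r} C \<psi>" for \<psi>
    proof -
      have rF: "r \<in> Fix V E \<psi>"
      proof (rule Fix.ty[OF r], intro allI impI)
        fix w assume w: "w \<in> V \<and> w \<noteq> r \<and> \<psi> w = \<psi> r \<and> \<psi> ` {u. E w u} = \<psi> ` {u. E r u}"
        have w0: "\<psi> w = 0" using w psi(1) \<phi>r unfolding C_def by auto
        have False
        proof (cases "card {u. E r u} < D")
          case True
          have "{1..D} \<subseteq> \<psi> ` {u. E w u}" using psi(2) w w0 unfolding Gc_def by blast
          then have "{1..D} \<subseteq> \<psi> ` {u. E r u}" using w by simp
          then have "D \<le> card (\<psi> ` {u. E r u})" using card_mono[OF finite_imageI[OF finN]] by fastforce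
          also have "\<dots> \<le> card {u. E r u}" using card_image_le[OF finN] .
          finally show False using True by simp
        next
          case False
          then have "w \<in> N" using alt w unfolding N_def by blast
          then show False using w0 psi(1) \<phi>N unfolding C_def by fastforce
        qed
        then show "w \<in> Fix V E \<psi>" ..
      qed
      have "v \<in> Fix V E \<psi>" if vN: "v \<in> N" for v
      proof (rule Fix.sib[of v V r])
        show "v \<in> V" using vN CV unfolding C_def by blast
        show "r \<in> Fix V E \<psi>" by (rule rF)
        show "E r v" using vN unfolding N_def by blast
        show "\<forall>x. E r x \<and> x \<noteq> v \<and> \<psi> x = \<psi> v \<longrightarrow> x \<in> Fix V E \<psi>"
        proof (intro allI impI)
          fix x assume x: "E r x \<and> x \<noteq> v \<and> \<psi> x = \<psi> v"
          then have xN: "x \<in> N" unfolding N_def by blast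
          have "\<psi> x = g x" "\<psi> v = g v" using psi(1) xN vN \<phi>N unfolding C_def by auto
          then have "x = v" using x g(2) xN vN by (metis inj_onD)
          then show "x \<in> Fix V E \<psi>" using x by blast
        qed
      qed
      then show ?thesis using rF unfolding C_def by blast
    qed
  qed
  then show ?thesis unfolding C_def N_def by blast
qed


lemma closure:
  assumes conn: "\<forall>x\<in>V. \<forall>y\<in>V. (x, y) \<in> {(u, v). E u v}\<^sup>*"
    and r: "r \<in> V" "r \<in> S" and cl: "\<And>x y. x \<in> S \<Longrightarrow> E x y \<Longrightarrow> y \<in> S"
  shows "V \<subseteq> S"
proof
  fix y assume y: "y \<in> V"
  have "(r, y) \<in> {(u, v). E u v}\<^sup>*" using conn r y by blast
  then show "y \<in> S"
    by (induction rule: rtrancl_induct) (use r cl in auto)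
qed

lemma nb2:
  assumes "card {u. E v u} = 2" "E v a"
  shows "\<exists>b. b \<noteq> a \<and> (\<forall>y. E v y \<longleftrightarrow> y = a \<or> y = b)"
proof -
  obtain x y where xy: "{u. E v u} = {x, y}" "x \<noteq> y" using assms(1) card_2_iff by metis
  have "a = x \<or> a = y" using xy assms(2) by blast
  then show ?thesis
  proof
    assume "a = x" then show ?thesis using xy by (intro exI[of _ y]) blast
  next
    assume "a = y" then show ?thesis using xy by (intro exI[of _ x]) blast
  qed
qed


end


context g5 begin
lemma lt6: "i < (6::nat) \<Longrightarrow> i = 0 \<or> i = 1 \<or> i = 2 \<or> i = 3 \<or> i = 4 \<or> i = 5" by auto

lemma init2:
  assumes conn: "\<forall>x\<in>V. \<forall>y\<in>V. (x, y) \<in> {(u, v). E u v}\<^sup>*"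
    and deg2: "\<forall>v\<in>V. card {u. E v u} = 2" and r: "r \<in> V" and nc6: "\<not> iso_to_cycle V E 6"
  shows "\<exists>C \<phi>. inv 2 {r} C C \<phi>"
proof -
  obtain s1 s2 where s12: "{u. E r u} = {s1, s2}" "s1 \<noteq> s2" using deg2 r card_2_iff by metis
  have Nr: "E r y \<longleftrightarrow> y = s1 \<or> y = s2" for y using s12 by blast
  have rs1: "E s1 r" "E s2 r" using Nr Esym by blast+
  have s1V: "s1 \<in> V" and s2V: "s2 \<in> V" using rs1 Ein by blast+
  obtain w where w: "w \<noteq> r" and Ns2: "\<And>y. E s2 y \<longleftrightarrow> y = r \<or> y = w"
    using nb2[of s2 r] deg2 s2V rs1 by blast
  obtain t where t: "t \<noteq> r" and Ns1: "\<And>y. E s1 y \<longleftrightarrow> y = r \<or> y = t"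
    using nb2[of s1 r] deg2 s1V rs1 by blast
  have wV: "w \<in> V" and tV: "t \<in> V" using Ns1 Ns2 Ein by blast+
  have ws2: "E w s2" using Ns2 Esym by blast
  obtain w' where w': "w' \<noteq> s2" and Nw: "\<And>y. E w y \<longleftrightarrow> y = s2 \<or> y = w'"
    using nb2[of w s2] deg2 wV ws2 by blast
  have w'V: "w' \<in> V" using Nw Ein by blast
  have d1: "r \<noteq> s1" "r \<noteq> s2" using Nr Eirr by blast+
  have d2: "w \<noteq> s1"
  proof
    assume "w = s1" then have "E s1 s2" using Ns2 Esym by blast
    then show False using no_tri[of r s1 s2] Nr by blast
  qed
  have d3: "w \<noteq> s2" using Ns2 Eirr by blast
  have d4: "t \<noteq> s1" using Ns1 Eirr by blast
  have d5: "t \<noteq> s2"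
  proof
    assume "t = s2" then have "E s1 s2" using Ns1 by blast
    then show False using no_tri[of r s1 s2] Nr by blast
  qed
  have d6: "t \<noteq> w"
  proof
    assume "t = w" then have "E w s1" "E w s2" using Ns1 Ns2 Esym by blast+
    then have "w = r" using common_nbr[of w s1 s2 r] Nr s12(2) by blast
    then show False using w by blast
  qed
  have d7: "w' \<noteq> w" using Nw Eirr by blast
  have d8: "w' \<noteq> r"
  proof
    assume "w' = r" then have "E r w" using Nw Esym by blast
    then show False using Nr d2 d3 by blast
  qed
  have d9: "w' \<noteq> s1"
  proof
    assume "w' = s1" then have "E w s1" "E w s2" using Nw by blast+
    then have "w = r" using common_nbr[of w s1 s2 r] Nr s12(2) by blast
    then show False using w by blast
  qed
  have Nr': "E y r \<longleftrightarrow> y = s1 \<or> y = s2" for y using Nr Esym by blast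
  have Ns1': "E y s1 \<longleftrightarrow> y = r \<or> y = t" for y using Ns1 Esym by blast
  have Ns2': "E y s2 \<longleftrightarrow> y = r \<or> y = w" for y using Ns2 Esym by blast
  have Nw': "E y w \<longleftrightarrow> y = s2 \<or> y = w'" for y using Nw Esym by blast
  show ?thesis
  proof (cases "t \<noteq> w' \<and> E t w'")
    case True
    have tw': "E t w'" "t \<noteq> w'" using True by blast+
    obtain b where b: "b \<noteq> s1" and Nt0: "\<And>y. E t y \<longleftrightarrow> y = s1 \<or> y = b"
      using nb2[of t s1] deg2 tV Ns1' by blast
    have Nt: "E t y \<longleftrightarrow> y = s1 \<or> y = w'" for y using Nt0 tw' d9 by metis
    obtain c where c: "c \<noteq> w" and Nx0: "\<And>y. E w' y \<longleftrightarrow> y = w \<or> y = c"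
      using nb2[of w' w] deg2 w'V Nw' by blast
    have Nx: "E w' y \<longleftrightarrow> y = w \<or> y = t" for y using Nx0 tw' Esym d6 by metis
    define xs where "xs = [r, s1, t, w', w, s2]"
    have dist: "distinct xs" unfolding xs_def using d1 d2 d3 d4 d5 d6 d7 d8 d9 s12(2) t w w' tw'(2)
      by auto
    have V6: "V = set xs"
    proof
      show "set xs \<subseteq> V" unfolding xs_def using r s1V s2V tV wV w'V by auto
      show "V \<subseteq> set xs"
      proof (rule closure[OF conn r])
        show "r \<in> set xs" unfolding xs_def by simp
        fix x y assume "x \<in> set xs" "E x y"
        then show "y \<in> set xs" unfolding xs_def using Nr Ns1 Ns2 Nw Nt Nx by auto
      qed
    qed
    have "iso_to_cycle V E 6"
      unfolding iso_to_cycle_def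
    proof (intro exI conjI)
      show "bij_betw ((!) xs) {0..<6} V"
        by (rule bij_betw_nth[OF dist]) (auto simp: xs_def V6)
      show "\<forall>i<6. \<forall>j<6. E (xs ! i) (xs ! j) \<longleftrightarrow> (j = (i + 1) mod 6 \<or> i = (j + 1) mod 6)"
      proof (intro allI impI)
        fix i j :: nat assume i: "i < 6" and j: "j < 6"
        have dd: "r \<noteq> s1" "r \<noteq> t" "r \<noteq> w'" "r \<noteq> w" "r \<noteq> s2" "s1 \<noteq> r" "s1 \<noteq> t" "s1 \<noteq> w'" "s1 \<noteq> w" "s1 \<noteq> s2" "t \<noteq> r" "t \<noteq> s1" "t \<noteq> w'" "t \<noteq> w" "t \<noteq> s2" "w' \<noteq> r" "w' \<noteq> s1" "w' \<noteq> t" "w' \<noteq> w" "w' \<noteq> s2" "w \<noteq> r" "w \<noteq> s1" "w \<noteq> t" "w \<noteq> w'" "w \<noteq> s2" "s2 \<noteq> r" "s2 \<noteq> s1" "s2 \<noteq> t" "s2 \<noteq> w'" "s2 \<noteq> w"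
          using dist unfolding xs_def by auto
        from lt6[OF i] lt6[OF j] show "E (xs ! i) (xs ! j) \<longleftrightarrow> (j = (i + 1) mod 6 \<or> i = (j + 1) mod 6)"
          unfolding xs_def by (elim disjE) (simp_all add: Nr Ns1 Ns2 Nw Nt Nx dd)
      qed
    qed
    then show ?thesis using nc6 by blast
  next
    case False
    have ntw: "\<not> E t w'" "\<not> E w' t" using False Eirr Esym by blast+
    have irr: "\<not> E t t" "\<not> E w' w'" using Eirr by blast+
    define C where "C = {r, s1, s2, w, w', t}"
    define \<phi> :: "'a \<Rightarrow> nat" where "\<phi> x = (if x = r \<or> x = w then 0 else if x = s1 \<or> x = s2 then 1 else 2)" for x
    have c1: "\<phi> r = 0" "\<phi> w = 0" "\<phi> s1 = 1" "\<phi> s2 = 1" unfolding \<phi>_def using d1 d2 d3 by auto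
    have c2: "\<phi> w' = 2" "\<phi> t = 2" unfolding \<phi>_def using d4 d5 d6 d7 d8 d9 t w' by auto
    have CV: "C \<subseteq> V" unfolding C_def using r s1V s2V tV wV w'V by auto
    have "inv 2 {r} C C \<phi>"
    proof (rule invI)
      show "C \<subseteq> V" by (rule CV)
      show "C \<noteq> {}" unfolding C_def by blast
      show "\<phi> v \<le> 2" if "v \<in> C" for v unfolding \<phi>_def by auto
      show "\<phi> v \<noteq> \<phi> x" if "v \<in> C" "x \<in> C" "E v x" for v x
        using that c1 c2 ntw irr unfolding C_def
        by (auto simp: Nr Ns1 Ns2 Nw Nr' Ns1' Ns2' Nw')
      show "u \<in> C" if "v \<in> C" "\<phi> v = 0" "E v u" for v u
      proof -
        have "v = r \<or> v = w" using that(2) unfolding \<phi>_def by (auto split: if_splits)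
        then show ?thesis using that(3) unfolding C_def using Nr Nw by auto
      qed
      show "{1..2} \<subseteq> \<phi> ` {u. E v u}" if "v \<in> C" "v \<notin> {r}" "\<phi> v = 0" for v
      proof -
        have "v = w" using that unfolding \<phi>_def by (auto split: if_splits)
        moreover have "{u. E w u} = {s2, w'}" using Nw by blast
        moreover have "{1..2::nat} = {1, 2}" by auto
        ultimately show ?thesis using c1 c2 by auto
      qed
      show "\<exists>u\<in>C. E v u" if "v \<in> C" "\<phi> v \<noteq> 0" for v
        using that c1 unfolding C_def by (auto simp: Nr Ns1 Ns2 Nw Nr' Ns1' Ns2' Nw')
      show "\<exists>u\<in>C. E v u \<and> \<phi> u \<noteq> 0" if "v \<in> C" "v \<notin> C" "\<phi> v \<noteq> 0" for v
        using that by blast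
      show "C \<subseteq> Fix V E \<psi>" if psi: "\<forall>v\<in>C. \<psi> v = \<phi> v" "Gc 2 {r} C \<psi>" for \<psi>
      proof -
        have p1: "\<psi> r = 0" "\<psi> w = 0" "\<psi> s1 = 1" "\<psi> s2 = 1" "\<psi> w' = 2" "\<psi> t = 2"
          using psi(1) c1 c2 unfolding C_def by auto
        have G1: "\<And>v. v \<in> V \<Longrightarrow> v \<noteq> r \<Longrightarrow> \<psi> v = 0 \<Longrightarrow> {1..2} \<subseteq> \<psi> ` {u. E v u}"
          using psi(2) unfolding Gc_def by blast
        have G2: "\<And>v. v \<in> V \<Longrightarrow> v \<notin> C \<Longrightarrow> \<psi> v \<noteq> 0 \<Longrightarrow> \<exists>u. E v u \<and> \<psi> u \<noteq> 0"
          using psi(2) unfolding Gc_def by blast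
        have eNr: "{u. E r u} = {s1, s2}" using Nr by blast
        have eNs1: "{u. E s1 u} = {r, t}" using Ns1 by blast
        have eNs2: "{u. E s2 u} = {r, w}" using Ns2 by blast
        have eNw: "{u. E w u} = {s2, w'}" using Nw by blast
        have rF: "r \<in> Fix V E \<psi>"
        proof (rule Fix.ty[OF r], intro allI impI)
          fix x assume x: "x \<in> V \<and> x \<noteq> r \<and> \<psi> x = \<psi> r \<and> \<psi> ` {u. E x u} = \<psi> ` {u. E r u}"
          have "{1..2} \<subseteq> \<psi> ` {u. E x u}" using G1[of x] x p1 by argo
          then have "2 \<in> \<psi> ` {u. E x u}" by auto
          then have "2 \<in> \<psi> ` {u. E r u}" using x by argo
          then show "x \<in> Fix V E \<psi>" using eNr p1 by auto
        qed
        have s2F: "s2 \<in> Fix V E \<psi>"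
        proof (rule Fix.ty[OF s2V], intro allI impI)
          fix x assume x: "x \<in> V \<and> x \<noteq> s2 \<and> \<psi> x = \<psi> s2 \<and> \<psi> ` {u. E x u} = \<psi> ` {u. E s2 u}"
          have xV: "x \<in> V" and xs2: "x \<noteq> s2" and x1: "\<psi> x = 1" using x p1 by auto
          have "\<psi> ` {u. E s2 u} = {0}" using eNs2 p1 by simp
          then have img: "\<psi> ` {u. E x u} = {0}" using x by argo
          have False
          proof (cases "x \<in> C")
            case True
            have "x \<noteq> r" "x \<noteq> w" "x \<noteq> w'" "x \<noteq> t" using x1 p1 by auto
            then have "x = s1" using True xs2 unfolding C_def by blast
            then have "\<psi> t \<in> \<psi> ` {u. E x u}" using eNs1 by blast
            then show False using img p1 by simp
          next
            case False
            have "\<psi> x \<noteq> 0" using x1 by simp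
            then obtain u where "E x u" "\<psi> u \<noteq> 0" using G2[of x] xV False by blast
            then have "\<psi> u \<in> \<psi> ` {u. E x u}" by blast
            then show False using img \<open>\<psi> u \<noteq> 0\<close> by simp
          qed
          then show "x \<in> Fix V E \<psi>" ..
        qed
        have s1F: "s1 \<in> Fix V E \<psi>"
        proof (rule Fix.sib[OF s1V rF])
          show "E r s1" using Nr by blast
          show "\<forall>x. E r x \<and> x \<noteq> s1 \<and> \<psi> x = \<psi> s1 \<longrightarrow> x \<in> Fix V E \<psi>"
          proof (intro allI impI)
            fix x assume "E r x \<and> x \<noteq> s1 \<and> \<psi> x = \<psi> s1"
            then have "x = s2" using Nr by blast
            then show "x \<in> Fix V E \<psi>" using s2F by simp
          qed
        qed
        have wF: "w \<in> Fix V E \<psi>"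
        proof (rule Fix.sib[OF wV s2F])
          show "E s2 w" using Ns2 by blast
          show "\<forall>x. E s2 x \<and> x \<noteq> w \<and> \<psi> x = \<psi> w \<longrightarrow> x \<in> Fix V E \<psi>"
          proof (intro allI impI)
            fix x assume "E s2 x \<and> x \<noteq> w \<and> \<psi> x = \<psi> w"
            then have "x = r" using Ns2 by blast
            then show "x \<in> Fix V E \<psi>" using rF by simp
          qed
        qed
        have w'F: "w' \<in> Fix V E \<psi>"
        proof (rule Fix.sib[OF w'V wF])
          show "E w w'" using Nw by blast
          show "\<forall>x. E w x \<and> x \<noteq> w' \<and> \<psi> x = \<psi> w' \<longrightarrow> x \<in> Fix V E \<psi>"
          proof (intro allI impI)
            fix x assume a: "E w x \<and> x \<noteq> w' \<and> \<psi> x = \<psi> w'"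
            then have "x = s2" using Nw by blast
            then have False using a p1 by simp
            then show "x \<in> Fix V E \<psi>" ..
          qed
        qed
        have tF: "t \<in> Fix V E \<psi>"
        proof (rule Fix.sib[OF tV s1F])
          show "E s1 t" using Ns1 by blast
          show "\<forall>x. E s1 x \<and> x \<noteq> t \<and> \<psi> x = \<psi> t \<longrightarrow> x \<in> Fix V E \<psi>"
          proof (intro allI impI)
            fix x assume a: "E s1 x \<and> x \<noteq> t \<and> \<psi> x = \<psi> t"
            then have "x = r" using Ns1 by blast
            then have False using a p1 by simp
            then show "x \<in> Fix V E \<psi>" ..
          qed
        qed
        show ?thesis unfolding C_def using rF s1F s2F wF w'F tF by blast
      qed
    qed
    then show ?thesis by blast
  qed
qed

end



lemma greedy:
  fixes F :: "'a \<Rightarrow> nat set"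
  assumes "finite X" "finite K" "\<forall>x\<in>X. card (F x) \<le> 1 \<and> finite (F x)" "card X + 1 \<le> card K"
  shows "\<exists>h. inj_on h X \<and> (\<forall>x\<in>X. h x \<in> K \<and> h x \<notin> F x)"
  using assms
proof (induction X rule: finite_induct)
  case empty then show ?case by simp
next
  case (insert x X)
  then obtain h where h: "inj_on h X" "\<forall>y\<in>X. h y \<in> K \<and> h y \<notin> F y" by auto
  have cX: "card (insert x X) = card X + 1" using insert by simp
  have "card (h ` X \<union> F x) \<le> card (h ` X) + card (F x)" by (rule card_Un_le)
  also have "\<dots> \<le> card X + 1" using card_image_le[OF insert.hyps(1), of h] insert.prems(2) by fastforce
  finally have c1: "card (h ` X \<union> F x) \<le> card X + 1" .
  have "card (h ` X \<union> F x) < card K" using c1 cX insert.prems(3) by linarith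
  moreover have "finite (h ` X \<union> F x)" using insert.hyps(1) insert.prems(2) by simp
  ultimately have "\<not> K \<subseteq> h ` X \<union> F x"
    using card_mono[of "h ` X \<union> F x" K] by linarith
  then obtain c where c: "c \<in> K" "c \<notin> h ` X" "c \<notin> F x" by blast
  define h' where "h' = h(x := c)"
  have "inj_on h' (insert x X)"
    unfolding h'_def using h(1) c(2) insert.hyps(2) by (auto simp: inj_on_def)
  moreover have "\<forall>y\<in>insert x X. h' y \<in> K \<and> h' y \<notin> F y"
    unfolding h'_def using h(2) c insert.hyps(2) by auto
  ultimately show ?case by blast
qed


context g5 begin

lemma init3:
  assumes degD: "\<forall>v\<in>V. card {u. E v u} = D" and D3: "3 \<le> D" and r: "r \<in> V"
  shows "\<exists>C \<phi> t. inv D {r, t} C C \<phi>"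
proof -
  define N where "N v = {u. E v u}" for v
  have fN: "finite (N v)" for v unfolding N_def by (rule finN)
  have cN: "v \<in> V \<Longrightarrow> card (N v) = D" for v using degD unfolding N_def by blast
  have NV: "x \<in> N v \<Longrightarrow> x \<in> V" for x v unfolding N_def using Ein by blast
  have Nsym: "x \<in> N v \<longleftrightarrow> v \<in> N x" for x v unfolding N_def using Esym by blast
  have bigN: "v \<in> V \<Longrightarrow> a \<in> N v \<Longrightarrow> \<exists>b\<in>N v. b \<noteq> a" for v a
  proof -
    assume "v \<in> V" "a \<in> N v"
    then have "card (N v - {a}) = D - 1" using cN fN by (simp add: card_Diff_singleton)
    then have "card (N v - {a}) \<noteq> 0" using D3 by simp
    then have "N v - {a} \<noteq> {}" by (metis card.empty)
    then show ?thesis by blast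
  qed
  have "card (N r) \<noteq> 0" using cN[OF r] D3 by simp
  then have "N r \<noteq> {}" by (metis card.empty)
  then obtain s1 where s1: "s1 \<in> N r" by blast
  have s1V: "s1 \<in> V" using NV s1 by blast
  obtain t where t: "t \<in> N s1" "t \<noteq> r" using bigN[OF s1V] s1 Nsym by blast
  have tV: "t \<in> V" using NV t by blast
  have rt: "r \<notin> N t" "t \<notin> N r"
  proof -
    have "E r s1" "E s1 t" using s1 t unfolding N_def by auto
    then have "\<not> E r t" using no_tri[of r s1 t] by blast
    then show "r \<notin> N t" "t \<notin> N r" using Esym unfolding N_def by auto
  qed
  have rN: "r \<notin> N r" "t \<notin> N t" unfolding N_def using Eirr by blast+
  have inter: "x \<in> N r \<Longrightarrow> x \<in> N t \<Longrightarrow> x = s1" for x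
  proof -
    assume a: "x \<in> N r" "x \<in> N t"
    have "E x r" "E x t" using a Esym unfolding N_def by blast+
    moreover have "E s1 r" using s1 Esym unfolding N_def by blast
    moreover have "E s1 t" using t unfolding N_def by blast
    ultimately show "x = s1" using common_nbr[of x r t s1] t(2) by metis
  qed
  have s1t: "s1 \<in> N t" using t Nsym by blast
  obtain w where w: "w \<in> N t" "w \<noteq> s1" using bigN[OF tV s1t] by blast
  have wV: "w \<in> V" using NV w by blast
  have wr: "w \<notin> N r" using inter w by blast
  have one: "x \<in> N r \<Longrightarrow> y \<in> N r \<Longrightarrow> x \<in> N v \<Longrightarrow> y \<in> N v \<Longrightarrow> v \<noteq> r \<Longrightarrow> x = y" for x y v
  proof -
    assume a: "x \<in> N r" "y \<in> N r" "x \<in> N v" "y \<in> N v" "v \<noteq> r"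
    then have "E x r" "E x v" "E y r" "E y v" using Esym unfolding N_def by auto
    then show "x = y" using common_nbr[of x r v y] a(5) by metis
  qed
  have one': "x \<in> N t \<Longrightarrow> y \<in> N t \<Longrightarrow> x \<in> N v \<Longrightarrow> y \<in> N v \<Longrightarrow> v \<noteq> t \<Longrightarrow> x = y" for x y v
  proof -
    assume a: "x \<in> N t" "y \<in> N t" "x \<in> N v" "y \<in> N v" "v \<noteq> t"
    then have "E x t" "E x v" "E y t" "E y v" using Esym unfolding N_def by auto
    then show "x = y" using common_nbr[of x t v y] a(5) by metis
  qed
  obtain a0 where a0: "a0 \<in> N r" "a0 \<noteq> s1" using bigN[OF r s1] by blast
  obtain s2 where s2: "s2 \<in> N r" "s2 \<noteq> s1" "s2 \<notin> N w"
  proof (cases "a0 \<in> N w")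
    case False then show ?thesis using that a0 by blast
  next
    case True
    obtain a1 where a1: "a1 \<in> N r" "a1 \<noteq> s1" "a1 \<noteq> a0"
    proof -
      have "card (N r - {s1, a0}) = D - 2" using cN[OF r] fN s1 a0 by (simp add: card_Diff_subset)
      then have "card (N r - {s1, a0}) \<noteq> 0" using D3 by simp
      then have "N r - {s1, a0} \<noteq> {}" by (metis card.empty)
      then show ?thesis using that by blast
    qed
    have "w \<noteq> r" using rt w by blast
    then have "a1 \<notin> N w" using one[of a0 a1 w] a0 a1 True by blast
    then show ?thesis using that a1 by blast
  qed
  have s2t: "s2 \<notin> N t" using inter s2 by blast
  define A where "A = N r - {s1, s2}"
  define B where "B = N t - {s1, w}"
  have fA: "finite A" and fB: "finite B" unfolding A_def B_def using fN by auto
  have cA: "card A = D - 2" unfolding A_def using cN[OF r] fN s1 s2 by (simp add: card_Diff_subset)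
  have cB: "card B = D - 2" unfolding B_def using cN[OF tV] fN s1t w by (simp add: card_Diff_subset)
  have cK: "card {2..D} = D - 1" by simp
  have "card A \<le> card {2..D}" using cA cK by simp
  then obtain hA where hA: "inj_on hA A" "hA ` A \<subseteq> {2..D}"
    using card_le_inj[OF fA, of "{2..D}"] by auto
  have "card (hA ` A) = D - 2" using card_image[OF hA(1)] cA by simp
  then have "\<not> {2..D} \<subseteq> hA ` A" using card_mono[of "hA ` A" "{2..D}"] fA cK D3 by fastforce
  then obtain mA where mA: "mA \<in> {2..D}" "mA \<notin> hA ` A" by blast
  have "card B \<noteq> 0" using cB D3 by simp
  then have "B \<noteq> {}" by (metis card.empty)
  then obtain b0 where b0: "b0 \<in> B" by blast
  define F where "F b = hA ` (N b \<inter> A)" for b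
  have Fc: "card (F b) \<le> 1 \<and> finite (F b)" if "b \<in> B" for b
  proof -
    have br: "b \<noteq> r" using that rt unfolding B_def by blast
    have sub: "N b \<inter> A \<subseteq> N r" unfolding A_def by blast
    have "\<forall>x\<in>N b \<inter> A. \<forall>y\<in>N b \<inter> A. x = y"
    proof (intro ballI)
      fix x y assume "x \<in> N b \<inter> A" "y \<in> N b \<inter> A"
      then show "x = y" using one[of x y b] br sub by blast
    qed
    moreover have "finite (N b \<inter> A)" using fA by blast
    ultimately have "card (N b \<inter> A) \<le> 1" using card_le_Suc0_iff_eq by (metis One_nat_def)
    moreover have "card (F b) \<le> card (N b \<inter> A)" unfolding F_def by (rule card_image_le) (use fA in blast)
    ultimately show ?thesis unfolding F_def using fA by simp
  qed
  have "card (B - {b0}) + 1 \<le> card ({2..D} - {mA})" using cB b0 fB mA D3 by (simp add: card_Diff_singleton)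
  moreover have "\<forall>x\<in>B - {b0}. card (F x) \<le> 1 \<and> finite (F x)" using Fc by blast
  ultimately obtain hB0 where hB0: "inj_on hB0 (B - {b0})" "\<forall>x\<in>B - {b0}. hB0 x \<in> {2..D} - {mA} \<and> hB0 x \<notin> F x"
    using greedy[of "B - {b0}" "{2..D} - {mA}" F] fB by blast
  define hB where "hB = hB0(b0 := mA)"
  have hBi: "inj_on hB B"
  proof (rule inj_onI)
    fix x y assume xy: "x \<in> B" "y \<in> B" "hB x = hB y"
    show "x = y"
    proof (cases "x = b0")
      case True
      show ?thesis
      proof (rule ccontr)
        assume "x \<noteq> y"
        then have "y \<in> B - {b0}" using True xy by blast
        then have "hB y \<noteq> mA" "hB y = hB0 y" using hB0(2) unfolding hB_def by auto
        then show False using xy True unfolding hB_def by simp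
      qed
    next
      case False
      show ?thesis
      proof (cases "y = b0")
        case True
        then have "x \<in> B - {b0}" using False xy by blast
        then have "hB x \<noteq> mA" using hB0(2) unfolding hB_def by auto
        then show ?thesis using xy True unfolding hB_def by simp
      next
        case False2: False
        then have "hB0 x = hB0 y" using xy False unfolding hB_def by simp
        then show ?thesis using hB0(1) xy False False2 by (meson DiffI inj_onD singletonD)
      qed
    qed
  qed
  have "mA \<notin> F b0" unfolding F_def using mA by blast
  then have hBr: "\<forall>x\<in>B. hB x \<in> {2..D} \<and> hB x \<notin> F x" unfolding hB_def using hB0 mA by auto
  have hBb: "hB b0 = mA" unfolding hB_def by simp
  have Ar: "A \<subseteq> N r" and Bt: "B \<subseteq> N t" unfolding A_def B_def by blast+
  have Nr_eq: "N r = {s1, s2} \<union> A" unfolding A_def using s1 s2 by blast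
  have Nt_eq: "N t = {s1, w} \<union> B" unfolding B_def using s1t w by blast
  have AB: "A \<inter> B = {}" using inter Ar Bt unfolding A_def by blast
  have tri: "x \<in> N v \<Longrightarrow> y \<in> N v \<Longrightarrow> \<not> E x y" for x y v
    using no_tri[of v x y] unfolding N_def by blast
  define C where "C = {r, t} \<union> N r \<union> N t"
  define \<phi> where "\<phi> x = (if x \<in> {r, t} then 0 else if x \<in> {s1, s2, w} then 1 else if x \<in> A then hA x else hB x)" for x
  have rtn: "r \<noteq> t" using t by blast
  have nr: "r \<notin> {s1, s2, w} \<union> A \<union> B" "t \<notin> {s1, s2, w} \<union> A \<union> B"
    using rN rt Ar Bt s1 s2 w s1t by blast+
  have d: "s1 \<notin> A" "s1 \<notin> B" "s2 \<notin> A" "s2 \<notin> B" "w \<notin> A" "w \<notin> B"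
    using s2t wr Ar Bt unfolding A_def B_def by blast+
  have vr: "\<phi> r = 0" "\<phi> t = 0" unfolding \<phi>_def by auto
  have v1: "\<phi> s1 = 1" "\<phi> s2 = 1" "\<phi> w = 1" unfolding \<phi>_def using nr by auto
  have vA: "x \<in> A \<Longrightarrow> \<phi> x = hA x" for x unfolding \<phi>_def using nr d by auto
  have vB: "x \<in> B \<Longrightarrow> \<phi> x = hB x" for x unfolding \<phi>_def using nr d AB by auto
  have hA2: "x \<in> A \<Longrightarrow> hA x \<in> {2..D}" for x using hA(2) by blast
  have hB2: "x \<in> B \<Longrightarrow> hB x \<in> {2..D}" for x using hBr by blast
  have Ccl: "x \<in> C \<Longrightarrow> x = r \<or> x = t \<or> x = s1 \<or> x = s2 \<or> x = w \<or> x \<in> A \<or> x \<in> B" for x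
    unfolding C_def using Nr_eq Nt_eq by blast
  have cl0: "x \<in> C \<Longrightarrow> \<phi> x = 0 \<Longrightarrow> x = r \<or> x = t" for x
    using Ccl[of x] v1 vA vB hA2 hB2 by fastforce
  have cl1: "x \<in> C \<Longrightarrow> \<phi> x = 1 \<Longrightarrow> x = s1 \<or> x = s2 \<or> x = w" for x
    using Ccl[of x] vr vA vB hA2 hB2 by fastforce
  have cl2: "x \<in> C \<Longrightarrow> \<phi> x \<noteq> 0 \<Longrightarrow> \<phi> x \<noteq> 1 \<Longrightarrow> x \<in> A \<or> x \<in> B" for x
    using Ccl[of x] vr v1 by fastforce
  have CV: "C \<subseteq> V" unfolding C_def using r tV NV by blast
  have s2w: "\<not> E s2 w" using s2 Nsym unfolding N_def by blast
  have "inv D {r, t} C C \<phi>"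
  proof (rule invI)
    show "C \<subseteq> V" by (rule CV)
    show "C \<noteq> {}" unfolding C_def by blast
    show "\<phi> v \<le> D" if "v \<in> C" for v
      using Ccl[OF that] vr v1 vA vB hA2 hB2 D3 by fastforce
    show "\<phi> v \<noteq> \<phi> x" if vx: "v \<in> C" "x \<in> C" "E v x" for v x
    proof
      assume eq: "\<phi> v = \<phi> x"
      have vnx: "v \<noteq> x" using Eirr vx(3) by blast
      consider "\<phi> v = 0" | "\<phi> v = 1" | "\<phi> v \<noteq> 0 \<and> \<phi> v \<noteq> 1" by blast
      then show False
      proof cases
        case 1
        then have "v = r \<or> v = t" "x = r \<or> x = t" using cl0 vx eq by auto
        then show False using vnx vx(3) rt Esym unfolding N_def by blast
      next
        case 2
        then have v: "v = s1 \<or> v = s2 \<or> v = w" and x: "x = s1 \<or> x = s2 \<or> x = w"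
          using cl1 vx eq by auto
        have "\<not> E s1 s2" "\<not> E s2 s1" using tri[of s1 r s2] tri[of s2 r s1] s1 s2 by blast+
        moreover have "\<not> E s1 w" "\<not> E w s1" using tri[of s1 t w] tri[of w t s1] s1t w by blast+
        moreover have "\<not> E w s2" using s2w Esym by blast
        ultimately show False using v x vnx vx(3) s2w by blast
      next
        case 3
        then have v: "v \<in> A \<or> v \<in> B" and x: "x \<in> A \<or> x \<in> B" using cl2 vx eq by auto
        have AA: "\<not> (v \<in> A \<and> x \<in> A)" using tri[of v r x] Ar vx(3) by blast
        have BB: "\<not> (v \<in> B \<and> x \<in> B)" using tri[of v t x] Bt vx(3) by blast
        have ab: "a \<in> A \<Longrightarrow> b \<in> B \<Longrightarrow> E a b \<Longrightarrow> \<phi> a \<noteq> \<phi> b" for a b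
        proof -
          assume ab: "a \<in> A" "b \<in> B" "E a b"
          have "a \<in> N b \<inter> A" using ab Esym unfolding N_def by blast
          then have "hA a \<in> F b" unfolding F_def by blast
          then show "\<phi> a \<noteq> \<phi> b" using hBr ab vA vB by metis
        qed
        show False using v x AA BB ab[of v x] ab[of x v] vx(3) Esym eq by metis
      qed
    qed
    show "u \<in> C" if "v \<in> C" "\<phi> v = 0" "E v u" for v u
      using cl0[OF that(1,2)] that(3) unfolding C_def N_def by blast
    show "{1..D} \<subseteq> \<phi> ` {u. E v u}" if "v \<in> C" "v \<notin> {r, t}" "\<phi> v = 0" for v
      using cl0[OF that(1,3)] that(2) by blast
    show "\<exists>u\<in>C. E v u" if "v \<in> C" "\<phi> v \<noteq> 0" for v
    proof -
      have "v \<in> N r \<or> v \<in> N t" using that vr unfolding C_def by blast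
      then show ?thesis unfolding C_def using Nsym unfolding N_def by blast
    qed
    show "\<exists>u\<in>C. E v u \<and> \<phi> u \<noteq> 0" if "v \<in> C" "v \<notin> C" "\<phi> v \<noteq> 0" for v
      using that by blast
    show "C \<subseteq> Fix V E \<psi>" if psi: "\<forall>v\<in>C. \<psi> v = \<phi> v" "Gc D {r, t} C \<psi>" for \<psi>
    proof -
      have NrC: "N r \<subseteq> C" and NtC: "N t \<subseteq> C" unfolding C_def by blast+
      have imr: "\<psi> ` N r = \<phi> ` N r" using psi(1) NrC by (intro image_cong) auto
      have imt: "\<psi> ` N t = \<phi> ` N t" using psi(1) NtC by (intro image_cong) auto
      have G1: "\<And>v. v \<in> V \<Longrightarrow> v \<notin> {r, t} \<Longrightarrow> \<psi> v = 0 \<Longrightarrow> {1..D} \<subseteq> \<psi> ` N v"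
        using psi(2) unfolding Gc_def N_def by blast
      have cardr: "card (\<phi> ` N r) \<le> D - 1"
      proof -
        have "\<phi> ` N r \<subseteq> \<phi> ` (N r - {s2})"
        proof
          fix y assume "y \<in> \<phi> ` N r"
          then obtain x where x: "x \<in> N r" "y = \<phi> x" by blast
          show "y \<in> \<phi> ` (N r - {s2})"
          proof (cases "x = s2")
            case True then have "y = \<phi> s1" using x v1 by simp
            then show ?thesis using s1 s2(2) by blast
          qed (use x in blast)
        qed
        then have "card (\<phi> ` N r) \<le> card (\<phi> ` (N r - {s2}))" by (rule card_mono[rotated]) (use fN in blast)
        also have "\<dots> \<le> card (N r - {s2})" by (rule card_image_le) (use fN in blast)
        also have "\<dots> = D - 1" using cN[OF r] s2 fN by (simp add: card_Diff_singleton)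
        finally show ?thesis .
      qed
      have cardt: "card (\<phi> ` N t) \<le> D - 1"
      proof -
        have "\<phi> ` N t \<subseteq> \<phi> ` (N t - {w})"
        proof
          fix y assume "y \<in> \<phi> ` N t"
          then obtain x where x: "x \<in> N t" "y = \<phi> x" by blast
          show "y \<in> \<phi> ` (N t - {w})"
          proof (cases "x = w")
            case True then have "y = \<phi> s1" using x v1 by simp
            then show ?thesis using s1t w(2) by blast
          qed (use x in blast)
        qed
        then have "card (\<phi> ` N t) \<le> card (\<phi> ` (N t - {w}))" by (rule card_mono[rotated]) (use fN in blast)
        also have "\<dots> \<le> card (N t - {w})" by (rule card_image_le) (use fN in blast)
        also have "\<dots> = D - 1" using cN[OF tV] w fN by (simp add: card_Diff_singleton)
        finally show ?thesis .
      qed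
      have mAt: "mA \<in> \<phi> ` N t" using b0 Bt vB hBb by (metis image_eqI subsetD)
      have mAr: "mA \<notin> \<phi> ` N r"
      proof
        assume "mA \<in> \<phi> ` N r"
        then obtain x where x: "x \<in> N r" "mA = \<phi> x" by blast
        then have "x \<in> {s1, s2} \<or> x \<in> A" using Nr_eq by blast
        then show False using x v1 vA mA by auto
      qed
      have neq: "\<phi> ` N r \<noteq> \<phi> ` N t" using mAt mAr by blast
      have notall: "\<not> {1..D} \<subseteq> \<phi> ` N v" if "card (\<phi> ` N v) \<le> D - 1" for v
      proof
        assume "{1..D} \<subseteq> \<phi> ` N v"
        then have "card {1..D} \<le> card (\<phi> ` N v)" by (rule card_mono[rotated]) (use fN in blast)
        then show False using that D3 by simp
      qed
      have rF: "r \<in> Fix V E \<psi>"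
      proof (rule Fix.ty[OF r], intro allI impI)
        fix x assume x: "x \<in> V \<and> x \<noteq> r \<and> \<psi> x = \<psi> r \<and> \<psi> ` {u. E x u} = \<psi> ` {u. E r u}"
        have x0: "\<psi> x = 0" using x psi(1) vr unfolding C_def by auto
        have im: "\<psi> ` N x = \<phi> ` N r" using x imr unfolding N_def by simp
        have False
        proof (cases "x = t")
          case True then show False using im imt neq by simp
        next
          case False
          then have "{1..D} \<subseteq> \<psi> ` N x" using G1[of x] x x0 by blast
          then show False using im notall[OF cardr] by simp
        qed
        then show "x \<in> Fix V E \<psi>" ..
      qed
      have tF: "t \<in> Fix V E \<psi>"
      proof (rule Fix.ty[OF tV], intro allI impI)
        fix x assume x: "x \<in> V \<and> x \<noteq> t \<and> \<psi> x = \<psi> t \<and> \<psi> ` {u. E x u} = \<psi> ` {u. E t u}"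
        have x0: "\<psi> x = 0" using x psi(1) vr unfolding C_def by auto
        have im: "\<psi> ` N x = \<phi> ` N t" using x imt unfolding N_def by simp
        have False
        proof (cases "x = r")
          case True then show False using im imr neq by simp
        next
          case False
          then have "{1..D} \<subseteq> \<psi> ` N x" using G1[of x] x x0 by blast
          then show False using im notall[OF cardt] by simp
        qed
        then show "x \<in> Fix V E \<psi>" ..
      qed
      have s1F: "s1 \<in> Fix V E \<psi>"
        by (rule Fix.two[OF s1V rF tF rtn]) (use s1 s1t Nsym in \<open>auto simp: N_def\<close>)
      have s2F: "s2 \<in> Fix V E \<psi>"
      proof (rule Fix.sib[OF _ rF])
        show "s2 \<in> V" using s2 NV by blast
        show "E r s2" using s2 unfolding N_def by blast
        show "\<forall>x. E r x \<and> x \<noteq> s2 \<and> \<psi> x = \<psi> s2 \<longrightarrow> x \<in> Fix V E \<psi>"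
        proof (intro allI impI)
          fix x assume x: "E r x \<and> x \<noteq> s2 \<and> \<psi> x = \<psi> s2"
          then have xN: "x \<in> N r" unfolding N_def by blast
          then have "\<phi> x = 1" using x psi(1) NrC v1 s2 by (metis subsetD)
          then have "x = s1" using xN x Nr_eq vA hA2 by fastforce
          then show "x \<in> Fix V E \<psi>" using s1F by simp
        qed
      qed
      have wF: "w \<in> Fix V E \<psi>"
      proof (rule Fix.sib[OF wV tF])
        show "E t w" using w unfolding N_def by blast
        show "\<forall>x. E t x \<and> x \<noteq> w \<and> \<psi> x = \<psi> w \<longrightarrow> x \<in> Fix V E \<psi>"
        proof (intro allI impI)
          fix x assume x: "E t x \<and> x \<noteq> w \<and> \<psi> x = \<psi> w"
          then have xN: "x \<in> N t" unfolding N_def by blast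
          then have "\<phi> x = 1" using x psi(1) NtC v1 w by (metis subsetD)
          then have "x = s1" using xN x Nt_eq vB hB2 by fastforce
          then show "x \<in> Fix V E \<psi>" using s1F by simp
        qed
      qed
      have AF: "a \<in> Fix V E \<psi>" if a: "a \<in> A" for a
      proof (rule Fix.sib[OF _ rF])
        show "a \<in> V" using a Ar NV by blast
        show "E r a" using a Ar unfolding N_def by blast
        show "\<forall>x. E r x \<and> x \<noteq> a \<and> \<psi> x = \<psi> a \<longrightarrow> x \<in> Fix V E \<psi>"
        proof (intro allI impI)
          fix x assume x: "E r x \<and> x \<noteq> a \<and> \<psi> x = \<psi> a"
          then have xN: "x \<in> N r" unfolding N_def by blast
          have "\<psi> a = hA a" using psi(1) a Ar NrC vA by (metis subsetD)
          moreover have "\<psi> x = \<phi> x" using psi(1) xN NrC by blast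
          ultimately have eq: "\<phi> x = hA a" using x by simp
          have "x \<noteq> s1" "x \<noteq> s2" using eq v1 hA2[OF a] by auto
          then have xA: "x \<in> A" using xN Nr_eq by blast
          then have "hA x = hA a" using eq vA by simp
          then have "x = a" using hA(1) xA a by (meson inj_onD)
          then have False using x by blast
          then show "x \<in> Fix V E \<psi>" ..
        qed
      qed
      have BF: "b \<in> Fix V E \<psi>" if b: "b \<in> B" for b
      proof (rule Fix.sib[OF _ tF])
        show "b \<in> V" using b Bt NV by blast
        show "E t b" using b Bt unfolding N_def by blast
        show "\<forall>x. E t x \<and> x \<noteq> b \<and> \<psi> x = \<psi> b \<longrightarrow> x \<in> Fix V E \<psi>"
        proof (intro allI impI)
          fix x assume x: "E t x \<and> x \<noteq> b \<and> \<psi> x = \<psi> b"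
          then have xN: "x \<in> N t" unfolding N_def by blast
          have "\<psi> b = hB b" using psi(1) b Bt NtC vB by (metis subsetD)
          moreover have "\<psi> x = \<phi> x" using psi(1) xN NtC by blast
          ultimately have eq: "\<phi> x = hB b" using x by simp
          have "x \<noteq> s1" "x \<noteq> w" using eq v1 hB2[OF b] by auto
          then have xB: "x \<in> B" using xN Nt_eq by blast
          then have "hB x = hB b" using eq vB by simp
          then have "x = b" using hBi xB b by (meson inj_onD)
          then have False using x by blast
          then show "x \<in> Fix V E \<psi>" ..
        qed
      qed
      show ?thesis
      proof
        fix x assume "x \<in> C"
        then show "x \<in> Fix V E \<psi>" using Ccl[of x] rF tF s1F s2F wF AF BF by blast
      qed
    qed
  qed
  then show ?thesis by blast
qed

end



theorem theorem1:
  fixes V :: "'a set" and E :: "'a \<Rightarrow> 'a \<Rightarrow> bool"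
  assumes "simple_graph V E"
    and "connected_graph V E"
    and "girth_at_least V E 5"
    and "\<not> iso_to_cycle V E 6"
  shows "distinguishing_chromatic_number V E \<le> max_degree V E + 1"
proof -
  interpret g5 V E using assms(1,3) by unfold_locales
  define D where "D = max_degree V E"
  have conn: "\<forall>x\<in>V. \<forall>y\<in>V. (x, y) \<in> {(u, v). E u v}\<^sup>*" and Vne: "V \<noteq> {}"
    using assms(2) unfolding connected_graph_def by blast+
  have degeq: "degree V E v = card {u. E v u}" for v
  proof -
    have "{w\<in>V. E v w} = {u. E v u}" using Ein by blast
    then show ?thesis unfolding degree_def by simp
  qed
  have deg: "\<forall>v\<in>V. card {u. E v u} \<le> D"
  proof
    fix v assume "v \<in> V"
    then have "degree V E v \<le> Max (degree V E ` V)" using finV by (intro Max_ge) auto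
    then show "card {u. E v u} \<le> D" unfolding D_def max_degree_def degeq .
  qed
  have "\<exists>\<phi>. (\<forall>v\<in>V. \<phi> v \<le> D) \<and> (\<forall>v\<in>V. \<forall>w\<in>V. E v w \<longrightarrow> \<phi> v \<noteq> \<phi> w) \<and> V \<subseteq> Fix V E \<phi>"
  proof (cases "\<exists>r\<in>V. card {u. E r u} < D \<or> V \<subseteq> insert r {u. E r u}")
    case True
    then obtain r where r: "r \<in> V" "card {u. E r u} < D \<or> V \<subseteq> insert r {u. E r u}" by blast
    obtain \<phi> where "inv D {r} (insert r {u. E r u}) (insert r {u. E r u}) \<phi>"
      using init1[OF r(1) _ r(2)] deg r(1) by blast
    then show ?thesis using process[OF conn deg] by blast
  next
    case False
    have degD: "\<forall>v\<in>V. card {u. E v u} = D" using False deg by (meson le_neq_implies_less)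
    obtain r where r: "r \<in> V" using Vne by blast
    consider "D \<le> 1" | "D = 2" | "3 \<le> D" by linarith
    then show ?thesis
    proof cases
      case 1
      have "V \<subseteq> insert r {u. E r u}"
      proof (rule closure[OF conn r])
        show "r \<in> insert r {u. E r u}" by blast
        fix x y assume x: "x \<in> insert r {u. E r u}" and xy: "E x y"
        show "y \<in> insert r {u. E r u}"
        proof (cases "x = r")
          case True then show ?thesis using xy by blast
        next
          case False
          then have xr: "E x r" using x Esym by blast
          have "x \<in> V" using xy Ein by blast
          then have "card {u. E x u} \<le> 1" using degD 1 by simp
          then have "y = r" using card_le_Suc0_iff_eq[OF finN[of x]] xr xy by (metis One_nat_def mem_Collect_eq)
          then show ?thesis by blast
        qed
      qed
      then show ?thesis using False r by blast
    next
      case 2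
      obtain C \<phi> where "inv 2 {r} C C \<phi>" using init2[OF conn _ r assms(4)] degD 2 by blast
      then show ?thesis using process[OF conn deg] 2 by blast
    next
      case 3
      obtain C \<phi> t where "inv D {r, t} C C \<phi>" using init3[OF degD 3 r] by blast
      then show ?thesis using process[OF conn deg] by blast
    qed
  qed
  then obtain \<phi> where "\<forall>v\<in>V. \<phi> v \<le> D" "\<forall>v\<in>V. \<forall>w\<in>V. E v w \<longrightarrow> \<phi> v \<noteq> \<phi> w" "V \<subseteq> Fix V E \<phi>"
    by blast
  then show ?thesis using final unfolding D_def by blast
qed


end
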